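(* Let $f(x)=\sum_{i,j=1}^n a_{ij}x_ix_j$ be a real quadratic form with symmetric matrix $A=(a_{ij})$ and $\det A\ne0$. Then exactly one of the sets $C(f)$, $\mathrm{St}(f)$ is nonempty.
   Context: $H_n=\{x\in\mathbb R^n:\sum x_i=0\}$; $C(f)$ is the set of $h\in H_n\setminus\{0\}$ such that either $\partial f/\partial x_i(h)\le 0$ for all $i$ or $\partial f/\partial x_i(h)\ge 0$ for all $i$. $\mathrm{St}(f)=\{a\in\mathbb R^n: a_i>0\ \forall i,\ \partial f/\partial x_i(a)=\partial f/\partial x_j(a)\ \forall i,j\}$. *)

theory Defs
  imports "HOL-Analysis.Analysis"
begin

text \<open>Vectors in R^n are modelled as real^'n for a finite index type 'n (n = CARD('n)).\<close>

definition quad_form :: "real^'n^'n \<Rightarrow> real^'n \<Rightarrow> real" where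
  "quad_form A x = (\<Sum>i\<in>UNIV. \<Sum>j\<in>UNIV. A$i$j * x$i * x$j)"

definition partial :: "(real^'n \<Rightarrow> real) \<Rightarrow> 'n \<Rightarrow> real^'n \<Rightarrow> real" where
  "partial f i x = deriv (\<lambda>t. f (x + t *\<^sub>R axis i 1)) 0"

definition Hn :: "(real^'n) set" where
  "Hn = {x. (\<Sum>i\<in>UNIV. x$i) = 0}"

definition Cset :: "(real^'n \<Rightarrow> real) \<Rightarrow> (real^'n) set" where
  "Cset f = {h \<in> Hn - {0}. (\<forall>i. partial f i h \<le> 0) \<or> (\<forall>i. partial f i h \<ge> 0)}"

definition St :: "(real^'n \<Rightarrow> real) \<Rightarrow> (real^'n) set" where
  "St f = {a. (\<forall>i. a$i > 0) \<and> (\<forall>i j. partial f i a = partial f j a)}"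

end

theory Submission
  imports Defs
begin

lemma partial_quad:
  fixes A :: "real^'n^'n"
  assumes "transpose A = A"
  shows "partial (quad_form A) k x = 2 * (A *v x)$k"
proof -
  have sym: "A$i$j = A$j$i" for i j
    using assms by (metis transpose_def vec_lambda_beta)
  let ?e = "axis k (1::real)"
  have eq: "(\<lambda>t. quad_form A (x + t *\<^sub>R ?e)) =
     (\<lambda>t. \<Sum>i\<in>UNIV. \<Sum>j\<in>UNIV. A$i$j * (x$i + t * ?e$i) * (x$j + t * ?e$j))"
    by (simp add: quad_form_def)
  have "((\<lambda>t. \<Sum>i\<in>UNIV. \<Sum>j\<in>UNIV. A$i$j * (x$i + t * ?e$i) * (x$j + t * ?e$j))
        has_field_derivative
        (\<Sum>i\<in>UNIV. \<Sum>j\<in>UNIV. A$i$j * (?e$i) * (x$j + 0 * ?e$j) + A$i$j * (x$i + 0 * ?e$i) * ?e$j)) (at 0)"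
    by (auto intro!: derivative_eq_intros sum.cong simp: algebra_simps)
  moreover have "(\<Sum>i\<in>UNIV. \<Sum>j\<in>UNIV. A$i$j * (?e$i) * (x$j + 0 * ?e$j) + A$i$j * (x$i + 0 * ?e$i) * ?e$j)
     = 2 * (A *v x)$k"
  proof -
    have "(\<Sum>i\<in>UNIV. \<Sum>j\<in>UNIV. A$i$j * (?e$i) * (x$j + 0 * ?e$j) + A$i$j * (x$i + 0 * ?e$i) * ?e$j)
       = (\<Sum>i\<in>UNIV. \<Sum>j\<in>UNIV. A$i$j * (?e$i) * x$j) + (\<Sum>i\<in>UNIV. \<Sum>j\<in>UNIV. A$i$j * x$i * ?e$j)"
      by (simp add: sum.distrib)
    also have "\<dots> = (\<Sum>j\<in>UNIV. A$k$j * x$j) + (\<Sum>i\<in>UNIV. A$i$k * x$i)"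
    proof -
      have 1: "(\<Sum>i\<in>UNIV. \<Sum>j\<in>UNIV. A$i$j * (?e$i) * x$j) = (\<Sum>i\<in>UNIV. if i = k then (\<Sum>j\<in>UNIV. A$k$j * x$j) else 0)"
        by (intro sum.cong) (auto simp: axis_def)
      have 2: "(\<Sum>i\<in>UNIV. \<Sum>j\<in>UNIV. A$i$j * x$i * ?e$j) = (\<Sum>i\<in>UNIV. A$i$k * x$i)"
        by (intro sum.cong) (auto simp: axis_def if_distrib cong: if_cong)
      show ?thesis unfolding 1 2 by simp
    qed
    also have "\<dots> = 2 * (A *v x)$k"
      by (simp add: matrix_vector_mult_def sym mult.commute)
    finally show ?thesis .
  qed
  ultimately show ?thesis
    unfolding partial_def eq by (simp add: DERIV_imp_deriv)
qed

lemma adj_sym: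
  fixes A :: "real^'n^'n"
  assumes "transpose A = A"
  shows "x \<bullet> (A *v y) = (A *v x) \<bullet> y"
  by (metis assms dot_lmul_matrix transpose_matrix_vector)

lemma one_inner: "((\<chi> i. (1::real)) :: real^'n) \<bullet> h = (\<Sum>i\<in>UNIV. h$i)"
  by (simp add: inner_vec_def)

theorem proposition2:
  fixes A :: "real^'n^'n"
  assumes "transpose A = A"
    and "det A \<noteq> 0"
  shows "(Cset (quad_form A) \<noteq> {}) \<noteq> (St (quad_form A) \<noteq> {})"
proof -
  let ?o = "(\<chi> i. (1::real)) :: real^'n"
  have inv: "invertible A" using assms(2) invertible_det_nz by blast
  then obtain B where AB: "A ** B = mat 1" and BA: "B ** A = mat 1"
    unfolding invertible_def by blast
  have ker: "A *v x = 0 \<Longrightarrow> x = 0" for x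
    using BA matrix_left_invertible_ker by blast
  have C_eq: "Cset (quad_form A) = {h \<in> Hn - {0}. (\<forall>i. (A *v h)$i \<le> 0) \<or> (\<forall>i. (A *v h)$i \<ge> 0)}"
    unfolding Cset_def by (simp add: partial_quad[OF assms(1)])
  have St_eq: "St (quad_form A) = {a. (\<forall>i. a$i > 0) \<and> (\<forall>i j. (A *v a)$i = (A *v a)$j)}"
    unfolding St_def by (simp add: partial_quad[OF assms(1)])
  have pos: "a \<bullet> y > 0" if "\<forall>i. a$i > 0" "\<forall>i. y$i \<ge> 0" "y \<noteq> 0" for a y :: "real^'n"
  proof -
    obtain j where "y$j \<noteq> 0" using \<open>y \<noteq> 0\<close> by (metis vec_eq_iff zero_index)
    then have "y$j > 0" using that(2) by (metis less_eq_real_def)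
    show ?thesis unfolding inner_vec_def
      by (rule sum_pos2[of UNIV j]) (use that \<open>y$j > 0\<close> in \<open>auto intro: mult_nonneg_nonneg less_imp_le\<close>)
  qed
  have not_both: False if h: "h \<in> Cset (quad_form A)" and a: "a \<in> St (quad_form A)" for h a
  proof -
    obtain k :: 'n where True by simp
    define c where "c = (A *v a)$k"
    from a have apos: "\<forall>i. a$i > 0" and aeq: "A *v a = c *\<^sub>R ?o"
      unfolding St_eq c_def by (auto simp: vec_eq_iff)
    from h have hH: "(\<Sum>i\<in>UNIV. h$i) = 0" and hnz: "h \<noteq> 0"
      unfolding C_eq Hn_def by auto
    have ynz: "A *v h \<noteq> 0" using ker hnz by blast
    have zero: "a \<bullet> (A *v h) = 0"
      using adj_sym[OF assms(1), of a h] aeq hH by (simp add: one_inner)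
    from h consider "\<forall>i. (A *v h)$i \<le> 0" | "\<forall>i. (A *v h)$i \<ge> 0"
      unfolding C_eq by auto
    then show False
    proof cases
      case 1
      have "a \<bullet> (- (A *v h)) > 0" using pos[OF apos, of "- (A *v h)"] 1 ynz by auto
      then show False using zero by simp
    next
      case 2
      show False using pos[OF apos 2 ynz] zero by simp
    qed
  qed
  have some: "Cset (quad_form A) \<noteq> {}" if "St (quad_form A) = {}"
  proof -
    define u where "u = B *v ?o"
    have Au: "A *v u = ?o" unfolding u_def
      by (simp add: matrix_vector_mul_assoc AB)
    have npos: "\<not> (\<forall>i. u$i > 0)"
    proof
      assume "\<forall>i. u$i > 0"
      then have "u \<in> St (quad_form A)" unfolding St_eq using Au by simp
      then show False using that by blast
    qed
    have nneg: "\<not> (\<forall>i. u$i < 0)"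
    proof
      assume uneg: "\<forall>i. u$i < 0"
    have mv_neg: "(A *v (-u))$i = - 1" for i
    proof -
      have "(A *v (-u))$i = - ((A *v u)$i)" by (simp add: matrix_vector_mult_def sum_negf)
      then show ?thesis using Au by simp
    qed
      then have "- u \<in> St (quad_form A)" unfolding St_eq using Au
        using uneg by (simp add: mv_neg)
      then show False using that by blast
    qed
    obtain y :: "real^'n" where y0: "\<forall>i. y$i \<ge> 0" and ynz: "y \<noteq> 0" and uy: "u \<bullet> y = 0"
    proof (cases "\<exists>i. u$i = 0")
      case True
      then obtain i where "u$i = 0" by blast
      show ?thesis
      proof (rule that[of "axis i (1::real)"])
        show "\<forall>k. 0 \<le> axis i (1::real) $ k" by (simp add: axis_def)
        show "axis i (1::real) \<noteq> 0" by simp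
        show "u \<bullet> axis i 1 = 0" by (simp add: inner_axis \<open>u$i = 0\<close>)
      qed
    next
      case False
      obtain i where ui: "u$i < 0" using npos False by (metis linorder_neqE_linordered_idom)
      obtain j where uj: "u$j > 0" using nneg False by (metis linorder_neqE_linordered_idom)
      have ij: "i \<noteq> j" using ui uj by auto
      show ?thesis
      proof (rule that[of "(- u$i) *\<^sub>R axis j (1::real) + u$j *\<^sub>R axis i (1::real)"])
        show "\<forall>k. 0 \<le> ((- u$i) *\<^sub>R axis j (1::real) + u$j *\<^sub>R axis i (1::real))$k"
          using ui uj by (auto simp: axis_def)
        show "(- u$i) *\<^sub>R axis j (1::real) + u$j *\<^sub>R axis i 1 \<noteq> 0"
        proof
          assume "(- u$i) *\<^sub>R axis j (1::real) + u$j *\<^sub>R axis i 1 = 0"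
          then have "((- u$i) *\<^sub>R axis j (1::real) + u$j *\<^sub>R axis i (1::real))$j = 0" by simp
          then show False using ij ui by (simp add: axis_def)
        qed
        show "u \<bullet> ((- u$i) *\<^sub>R axis j (1::real) + u$j *\<^sub>R axis i (1::real)) = 0"
          by (simp add: inner_add_right inner_diff_right inner_axis inner_scaleR_right algebra_simps)
      qed
    qed
    define h where "h = B *v y"
    have Ah: "A *v h = y" unfolding h_def by (simp add: matrix_vector_mul_assoc AB)
    have hnz: "h \<noteq> 0" using Ah ynz by auto
    have "(\<Sum>i\<in>UNIV. h$i) = 0"
      using adj_sym[OF assms(1), of u h] Au Ah uy by (simp add: one_inner)
    then have "h \<in> Cset (quad_form A)" unfolding C_eq Hn_def using hnz Ah y0 by auto
    then show ?thesis by blast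
  qed
  show ?thesis using not_both some by blast
qed

end
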